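(* Let $n\ge2$ and let $g_1,\dots,g_r\in\mathbb R[X_1,\dots,X_n]$ satisfy $1-\|\mathbf X\|_2^2\in\mathcal Q(\mathbf g)$ and $\|g_i\|\le\tfrac12$ for all $i$, and assume the CQC holds at every point of $S=\mathcal S(\mathbf g)$. Let $\gamma(n,\mathbf g)\ge1$ be a constant depending only on $n,\mathbf g$ such that every $h\in\mathbb R[\mathbf X]$ with $\min_Sh>0$ lies in $\mathcal Q_\ell(\mathbf g)$ whenever $\ell\ge\gamma(n,\mathbf g)\,d(h)^{3.5n}\epsilon(h)^{-2.5n}$; put $\gamma'(n,\mathbf g)=3^{2.5n}\gamma(n,\mathbf g)$ and $\gamma''(n,\mathbf g)=\gamma'(n,\mathbf g)^{1/(2.5n)}$. Let $f\in\mathbb R[\mathbf X]$ with $f\ge0$ on $S$ and $f^*=\min_Sf$. Then $$0\le f^*-f^*_{\mathrm{SoS},\ell}\le\gamma''(n,\mathbf g)\,\|f\|\,d(f)^{7/5}\,\ell^{-\frac1{2.5n}}.$$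
   Context: $\Sigma^2$ sums of squares; $\mathcal S(\mathbf g)=\{x:g_i(x)\ge0\ \forall i\}$ (nonempty); $\mathcal Q(\mathbf g)=\Sigma^2+\sum_i\Sigma^2g_i$; $\mathcal Q_\ell(\mathbf g)=\{s_0+\sum_is_ig_i: s_j\in\Sigma^2,\deg s_0\le\ell,\deg(s_ig_i)\le\ell\}$; $\|h\|=\max_{[-1,1]^n}|h|$; $d(h)=\deg h$; $\epsilon(h)=\min_Sh/\|h\|$; $f^*_{\mathrm{SoS},\ell}=\sup\{\lambda\in\mathbb R: f-\lambda\in\mathcal Q_{2\ell}(\mathbf g)\}$. CQC at $x\in S$: the gradients $\nabla g_i(x)$ of the constraints with $g_i(x)=0$ are linearly independent. *)

theory Defs
  imports "HOL-Analysis.Analysis" "HOL-Library.Poly_Mapping"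
begin

text \<open>Real multivariate polynomials in the variables indexed by the finite type 'n
  (so n = CARD('n)): finitely supported maps from exponent vectors to coefficients,
  with the library's convolution product.\<close>
type_synonym 'n mpoly = "('n \<Rightarrow>\<^sub>0 nat) \<Rightarrow>\<^sub>0 real"

definition mpeval :: "'n mpoly \<Rightarrow> ('n \<Rightarrow> real) \<Rightarrow> real" where
  "mpeval p x = (\<Sum>m\<in>Poly_Mapping.keys p. Poly_Mapping.lookup p m * (\<Prod>i\<in>Poly_Mapping.keys (m::'n \<Rightarrow>\<^sub>0 nat). x i ^ Poly_Mapping.lookup m i))"

definition mpdeg :: "'n mpoly \<Rightarrow> nat" where
  "mpdeg p = (if p = 0 then 0 else Max ((\<lambda>m::'n \<Rightarrow>\<^sub>0 nat. \<Sum>i\<in>Poly_Mapping.keys m. Poly_Mapping.lookup m i) ` Poly_Mapping.keys p))"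

definition sos :: "'n mpoly \<Rightarrow> bool" where
  "sos p \<longleftrightarrow> (\<exists>qs. p = sum_list (map (\<lambda>q. q * q) qs))"

definition semialg :: "nat \<Rightarrow> (nat \<Rightarrow> 'n mpoly) \<Rightarrow> ('n \<Rightarrow> real) set" where
  "semialg r g = {x. \<forall>i<r. mpeval (g i) x \<ge> 0}"

definition qmod :: "nat \<Rightarrow> (nat \<Rightarrow> 'n mpoly) \<Rightarrow> 'n mpoly set" where
  "qmod r g = {h. \<exists>s. (\<forall>j\<le>r. sos (s j)) \<and> h = s r + (\<Sum>i<r. s i * g i)}"

text \<open>truncated quadratic module Q_l(g); s r plays the role of s_0\<close>
definition qmod_trunc :: "nat \<Rightarrow> (nat \<Rightarrow> 'n mpoly) \<Rightarrow> nat \<Rightarrow> 'n mpoly set" where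
  "qmod_trunc r g l = {h. \<exists>s. (\<forall>j\<le>r. sos (s j)) \<and> mpdeg (s r) \<le> l
       \<and> (\<forall>i<r. mpdeg (s i * g i) \<le> l) \<and> h = s r + (\<Sum>i<r. s i * g i)}"

definition supnorm :: "'n mpoly \<Rightarrow> real" where
  "supnorm h = (SUP x\<in>{x. \<forall>i. \<bar>x i\<bar> \<le> 1}. \<bar>mpeval h x\<bar>)"

definition min_on :: "('n \<Rightarrow> real) set \<Rightarrow> 'n mpoly \<Rightarrow> real" where
  "min_on S h = (INF x\<in>S. mpeval h x)"

definition epsilon :: "('n \<Rightarrow> real) set \<Rightarrow> 'n mpoly \<Rightarrow> real" where
  "epsilon S h = min_on S h / supnorm h"

definition sos_bound :: "nat \<Rightarrow> (nat \<Rightarrow> 'n mpoly) \<Rightarrow> nat \<Rightarrow> 'n mpoly \<Rightarrow> real" where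
  "sos_bound r g l f = Sup {c::real. f - Poly_Mapping.single 0 c \<in> qmod_trunc r g (2 * l)}"

definition grad :: "'n mpoly \<Rightarrow> ('n \<Rightarrow> real) \<Rightarrow> ('n \<Rightarrow> real)" where
  "grad p x = (\<lambda>i. deriv (\<lambda>t. mpeval p (x(i := t))) (x i))"

definition CQC :: "nat \<Rightarrow> (nat \<Rightarrow> 'n mpoly) \<Rightarrow> ('n \<Rightarrow> real) \<Rightarrow> bool" where
  "CQC r g x \<longleftrightarrow> (let A = {i. i < r \<and> mpeval (g i) x = 0} in
     \<forall>c::nat \<Rightarrow> real. (\<forall>k. (\<Sum>i\<in>A. c i * grad (g i) x k) = 0) \<longrightarrow> (\<forall>i\<in>A. c i = 0))"

definition one_minus_normsq :: "'n::finite mpoly" where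
  "one_minus_normsq = 1 - (\<Sum>i\<in>UNIV. Poly_Mapping.single (Poly_Mapping.single i 2) 1)"

end

theory Submission
  imports Defs
begin

definition mon :: "('n \<Rightarrow>\<^sub>0 nat) \<Rightarrow> ('n \<Rightarrow> real) \<Rightarrow> real" where
  "mon m x = (\<Prod>i\<in>Poly_Mapping.keys m. x i ^ Poly_Mapping.lookup m i)"

lemma mon_univ: "mon m x = (\<Prod>i\<in>UNIV. x i ^ Poly_Mapping.lookup m (i::'n::finite))"
  unfolding mon_def
  by (rule prod.mono_neutral_left) (auto simp: in_keys_iff)

lemma mon_add: "mon (a + b) x = mon a x * mon (b::'n::finite \<Rightarrow>\<^sub>0 nat) x"
  by (simp add: mon_univ lookup_add power_add prod.distrib)

lemma mon_zero: "mon 0 x = 1"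
  by (simp add: mon_def)

lemma mpeval_mon: "mpeval p x = (\<Sum>m\<in>Poly_Mapping.keys p. Poly_Mapping.lookup p m * mon m x)"
  unfolding mpeval_def mon_def ..

lemma mpeval_superset:
  assumes "finite K" "Poly_Mapping.keys p \<subseteq> K"
  shows "mpeval p x = (\<Sum>m\<in>K. Poly_Mapping.lookup p m * mon m x)"
  unfolding mpeval_mon
  by (rule sum.mono_neutral_left) (use assms in \<open>auto simp: in_keys_iff\<close>)

lemma mpeval_zero: "mpeval 0 x = 0"
  by (simp add: mpeval_def)

lemma mpeval_add: "mpeval (p + q) x = mpeval p x + mpeval q x"
proof -
  let ?K = "Poly_Mapping.keys p \<union> Poly_Mapping.keys q \<union> Poly_Mapping.keys (p + q)"
  have f: "finite ?K" by simp
  have "mpeval (p + q) x = (\<Sum>m\<in>?K. Poly_Mapping.lookup (p + q) m * mon m x)"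
    by (rule mpeval_superset[OF f]) auto
  also have "\<dots> = (\<Sum>m\<in>?K. Poly_Mapping.lookup p m * mon m x) + (\<Sum>m\<in>?K. Poly_Mapping.lookup q m * mon m x)"
    by (simp add: lookup_add distrib_right sum.distrib)
  also have "\<dots> = mpeval p x + mpeval q x"
    by (subst (1 2) mpeval_superset[OF f]) auto
  finally show ?thesis .
qed

lemma mpeval_uminus: "mpeval (- p) x = - mpeval p x"
proof -
  have "mpeval (- p + p) x = mpeval (- p) x + mpeval p x" by (rule mpeval_add)
  moreover have "- p + p = 0" by simp
  ultimately show ?thesis by (simp add: mpeval_zero)
qed

lemma mpeval_diff: "mpeval (p - q) x = mpeval p x - mpeval q x"
  using mpeval_add[of p "- q" x] by (simp add: mpeval_uminus)

lemma mpeval_single: "mpeval (Poly_Mapping.single m c) x = c * mon m x"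
  by (simp add: mpeval_mon)

lemma mpeval_sum: "mpeval (\<Sum>i\<in>I. p i) x = (\<Sum>i\<in>I. mpeval (p i) x)"
  by (induction I rule: infinite_finite_induct) (auto simp: mpeval_zero mpeval_add)

lemma mp_expand: "p = (\<Sum>m\<in>Poly_Mapping.keys p. Poly_Mapping.single m (Poly_Mapping.lookup p m))"
  by (rule poly_mapping_eqI)
     (auto simp: lookup_sum lookup_single when_def in_keys_iff sum.delta)

lemma mpeval_mult: "mpeval (p * q) x = mpeval p x * mpeval (q::'n::finite mpoly) x"
proof -
  let ?P = "Poly_Mapping.keys p" and ?Q = "Poly_Mapping.keys q"
  have "p * q = (\<Sum>a\<in>?P. Poly_Mapping.single a (Poly_Mapping.lookup p a)) *
        (\<Sum>b\<in>?Q. Poly_Mapping.single b (Poly_Mapping.lookup q b))"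
    using mp_expand[of p] mp_expand[of q] by simp
  also have "\<dots> = (\<Sum>a\<in>?P. \<Sum>b\<in>?Q. Poly_Mapping.single (a + b) (Poly_Mapping.lookup p a * Poly_Mapping.lookup q b))"
    by (simp add: sum_product mult_single)
  finally have "mpeval (p * q) x = (\<Sum>a\<in>?P. \<Sum>b\<in>?Q. Poly_Mapping.lookup p a * Poly_Mapping.lookup q b * mon (a + b) x)"
    by (simp add: mpeval_sum mpeval_single)
  also have "\<dots> = (\<Sum>a\<in>?P. \<Sum>b\<in>?Q. (Poly_Mapping.lookup p a * mon a x) * (Poly_Mapping.lookup q b * mon b x))"
    by (simp add: mon_add algebra_simps)
  also have "\<dots> = mpeval p x * mpeval q x"
    by (simp add: mpeval_mon sum_product)
  finally show ?thesis .
qed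

lemma mpeval_one: "mpeval 1 x = 1"
  by (simp add: mpeval_mon mon_zero)

lemma sos_nonneg: "sos p \<Longrightarrow> mpeval (p::'n::finite mpoly) x \<ge> 0"
proof -
  have "mpeval (sum_list (map (\<lambda>q. q * q) qs)) x \<ge> 0" for qs :: "'n mpoly list"
    by (induction qs) (auto simp: mpeval_zero mpeval_add mpeval_mult)
  then show "sos p \<Longrightarrow> mpeval p x \<ge> 0" unfolding sos_def by auto
qed

lemma qmod_nonneg:
  assumes "h \<in> qmod r g" "x \<in> semialg r g"
  shows "mpeval (h::'n::finite mpoly) x \<ge> 0"
proof -
  obtain s where s: "\<forall>j\<le>r. sos (s j)" "h = s r + (\<Sum>i<r. s i * g i)"
    using assms(1) unfolding qmod_def by auto
  have "mpeval h x = mpeval (s r) x + (\<Sum>i<r. mpeval (s i) x * mpeval (g i) x)"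
    by (simp add: s(2) mpeval_add mpeval_sum mpeval_mult)
  also have "\<dots> \<ge> 0"
    using s(1) assms(2) unfolding semialg_def
    by (intro add_nonneg_nonneg sum_nonneg mult_nonneg_nonneg) (auto intro: sos_nonneg)
  finally show ?thesis .
qed

lemma qmod_trunc_nonneg:
  assumes "h \<in> qmod_trunc r g k" "x \<in> semialg r g"
  shows "mpeval (h::'n::finite mpoly) x \<ge> 0"
  using assms qmod_nonneg[of h r g x] unfolding qmod_trunc_def qmod_def by blast

lemma mpeval_normsq: "mpeval (one_minus_normsq :: 'n::finite mpoly) x = 1 - (\<Sum>i\<in>UNIV. x i ^ 2)"
  by (simp add: one_minus_normsq_def mpeval_diff mpeval_one mpeval_sum mpeval_single mon_def)

lemma semialg_cube:
  assumes "one_minus_normsq \<in> qmod r g" "x \<in> semialg r (g::nat \<Rightarrow> 'n::finite mpoly)"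
  shows "\<bar>x i\<bar> \<le> 1"
proof -
  have "1 - (\<Sum>i\<in>UNIV. x i ^ 2) \<ge> 0"
    using qmod_nonneg[OF assms] by (simp add: mpeval_normsq)
  moreover have "x i ^ 2 \<le> (\<Sum>i\<in>UNIV. x i ^ 2)"
    by (rule member_le_sum) auto
  ultimately have "x i ^ 2 \<le> 1" by linarith
  then show ?thesis by (simp add: abs_square_le_1)
qed


lemma mpdeg_minus_const: "mpdeg (f - Poly_Mapping.single 0 c) \<le> mpdeg f"
proof (cases "f - Poly_Mapping.single 0 c = 0")
  case True then show ?thesis by (simp add: mpdeg_def)
next
  case False
  let ?D = "\<lambda>m::'a \<Rightarrow>\<^sub>0 nat. \<Sum>i\<in>Poly_Mapping.keys m. Poly_Mapping.lookup m i"
  have "?D m \<le> mpdeg f" if m: "m \<in> Poly_Mapping.keys (f - Poly_Mapping.single 0 c)" for m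
  proof (cases "m = 0")
    case True then show ?thesis by simp
  next
    case False
    with m have "m \<in> Poly_Mapping.keys f"
      by (auto simp: in_keys_iff lookup_minus lookup_single when_def)
    then have "f \<noteq> 0" by auto
    with \<open>m \<in> Poly_Mapping.keys f\<close> show ?thesis
      unfolding mpdeg_def by (auto intro!: Max_ge)
  qed
  with False show ?thesis
    unfolding mpdeg_def[of "f - Poly_Mapping.single 0 c"]
    by (auto simp: Max_le_iff)
qed

definition cube :: "('n \<Rightarrow> real) set" where "cube = {x. \<forall>i. \<bar>x i\<bar> \<le> 1}"

lemma mon_le1: "x \<in> cube \<Longrightarrow> \<bar>mon m x\<bar> \<le> 1"
  unfolding mon_def cube_def abs_prod power_abs
  by (rule prod_le_1) (auto intro: power_le_one)

lemma mpeval_bound: "x \<in> cube \<Longrightarrow> \<bar>mpeval p x\<bar> \<le> (\<Sum>m\<in>Poly_Mapping.keys p. \<bar>Poly_Mapping.lookup p m\<bar>)"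
proof -
  assume x: "x \<in> cube"
  have "\<bar>mpeval p x\<bar> \<le> (\<Sum>m\<in>Poly_Mapping.keys p. \<bar>Poly_Mapping.lookup p m * mon m x\<bar>)"
    unfolding mpeval_mon by (rule sum_abs)
  also have "\<dots> \<le> (\<Sum>m\<in>Poly_Mapping.keys p. \<bar>Poly_Mapping.lookup p m\<bar>)"
    using mon_le1[OF x] by (intro sum_mono) (auto simp: abs_mult intro: mult_left_le)
  finally show ?thesis .
qed

lemma supnorm_cube: "supnorm h = (SUP x\<in>cube. \<bar>mpeval h x\<bar>)"
  by (simp add: supnorm_def cube_def)

lemma cube_ne: "(\<lambda>_. 0) \<in> cube" by (simp add: cube_def)

lemma bdd_cube: "bdd_above ((\<lambda>x. \<bar>mpeval p x\<bar>) ` cube)"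
  using mpeval_bound by (intro bdd_aboveI2) auto

lemma supnorm_ge: "x \<in> cube \<Longrightarrow> \<bar>mpeval p x\<bar> \<le> supnorm p"
  unfolding supnorm_cube by (rule cSUP_upper[OF _ bdd_cube])

lemma supnorm_nonneg: "0 \<le> supnorm p"
  using supnorm_ge[OF cube_ne, of p] by linarith

lemma mpeval_const: "mpeval (Poly_Mapping.single 0 c) x = c"
  by (simp add: mpeval_single mon_zero)

lemma supnorm_minus_const: "supnorm ((p::'n mpoly) - Poly_Mapping.single 0 c) \<le> supnorm p + \<bar>c\<bar>"
  unfolding supnorm_cube[of "p - _"]
proof (rule cSUP_least)
  show "cube \<noteq> {}" using cube_ne by auto
  fix x :: "'n \<Rightarrow> real" assume x: "x \<in> cube"
  have "\<bar>mpeval (p - Poly_Mapping.single 0 c) x\<bar> \<le> \<bar>mpeval p x\<bar> + \<bar>c\<bar>"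
    by (simp add: mpeval_diff mpeval_const)
  also have "\<dots> \<le> supnorm p + \<bar>c\<bar>" using supnorm_ge[OF x] by simp
  finally show "\<bar>mpeval (p - Poly_Mapping.single 0 c) x\<bar> \<le> supnorm p + \<bar>c\<bar>" .
qed


lemma key_arith:
  fixes \<gamma> N d l m pp \<delta> :: real
  assumes m: "m > 0" and g: "\<gamma> > 0" and N: "N > 0" and d: "d > 0" and l: "l > 0"
    and pp: "pp = 7/5 * m"
    and \<delta>: "\<delta> = (3 powr m * \<gamma>) powr (1/m) * N * d powr (7/5) * l powr (-1/m)"
  shows "\<gamma> * d powr pp * (2*N/\<delta>) powr m = (2/3) powr m * l"
proof -
  have A: "((3 powr m * \<gamma>) powr (1/m)) powr m = 3 powr m * \<gamma>"
    using m g by (simp add: powr_powr)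
  have B: "(d powr (7/5)) powr m = d powr pp"
    by (simp add: powr_powr pp)
  have C: "(l powr (-1/m)) powr m = 1 / l"
  proof -
    have "(l powr (-1/m)) powr m = l powr (-1/m * m)" by (simp add: powr_powr)
    also have "-1/m * m = -1" using m by simp
    finally show ?thesis using l by (simp add: powr_minus_divide)
  qed
  have dm: "\<delta> powr m = 3 powr m * \<gamma> * N powr m * d powr pp / l"
  proof -
    have gen: "(a*b*c*e) powr m = a powr m * b powr m * c powr m * e powr m" for a b c e :: real
      by (simp add: powr_mult)
    show ?thesis unfolding \<delta> gen A B C by simp
  qed
  have "(2*N/\<delta>) powr m = 2 powr m * N powr m / \<delta> powr m"
    by (simp add: powr_divide powr_mult)
  also have "\<dots> = 2 powr m * l / (3 powr m * \<gamma> * d powr pp)"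
    unfolding dm using N g d l by (simp add: field_simps)
  finally have E: "(2*N/\<delta>) powr m = 2 powr m * l / (3 powr m * \<gamma> * d powr pp)" .
  show ?thesis
    unfolding E using g d by (simp add: powr_divide field_simps)
qed

theorem mainTheorem19:
  fixes g :: "nat \<Rightarrow> 'n::finite mpoly" and r :: nat and \<gamma> :: real
    and f :: "'n mpoly" and l :: nat
  assumes n2: "CARD('n) \<ge> 2"
    and arch: "one_minus_normsq \<in> qmod r g"
    and gnorm: "\<forall>i<r. supnorm (g i) \<le> 1/2"
    and Sne: "semialg r g \<noteq> {}"
    and cqc: "\<forall>x\<in>semialg r g. CQC r g x"
    and gamma1: "\<gamma> \<ge> 1"
    and gamma: "\<forall>(h :: 'n mpoly) (k :: nat). min_on (semialg r g) h > 0 \<and>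
        real k \<ge> \<gamma> * real (mpdeg h) powr (3.5 * CARD('n))
                 * epsilon (semialg r g) h powr (- 2.5 * CARD('n))
        \<longrightarrow> h \<in> qmod_trunc r g k"
    and fnn: "\<forall>x\<in>semialg r g. mpeval f x \<ge> 0"
    and lbig: "real l \<ge> (3 powr (2.5 * CARD('n)) * \<gamma>) * real (mpdeg f) powr (3.5 * CARD('n))"
  shows "0 \<le> min_on (semialg r g) f - sos_bound r g l f \<and>
         min_on (semialg r g) f - sos_bound r g l f
           \<le> (3 powr (2.5 * CARD('n)) * \<gamma>) powr (1 / (2.5 * CARD('n)))
             * supnorm f * real (mpdeg f) powr (7/5) * real l powr (- 1 / (2.5 * CARD('n)))"
  proof -
  define S where "S = semialg r g"
  define m :: real where "m = 2.5 * real CARD('n)"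
  define pp :: real where "pp = 3.5 * real CARD('n)"
  define d where "d = mpdeg f"
  define N where "N = supnorm f"
  define fs where "fs = min_on S f"
  define \<delta> where "\<delta> = (3 powr (2.5 * CARD('n)) * \<gamma>) powr (1 / (2.5 * CARD('n)))
             * supnorm f * real (mpdeg f) powr (7/5) * real l powr (- 1 / (2.5 * CARD('n)))"
  have m0: "m > 0" unfolding m_def by simp
  have ppm: "pp = 7/5 * m" unfolding m_def pp_def by simp
  have \<delta>': "\<delta> = (3 powr m * \<gamma>) powr (1/m) * N * real d powr (7/5) * real l powr (-1/m)"
    unfolding \<delta>_def m_def N_def d_def by simp
  have N0: "N \<ge> 0" unfolding N_def by (rule supnorm_nonneg)
  have \<delta>0: "\<delta> \<ge> 0" unfolding \<delta>' using N0 by simp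
  have SC: "x \<in> cube" if "x \<in> S" for x
    using semialg_cube[OF arch] that unfolding S_def cube_def by auto
  have bddS: "bdd_below ((\<lambda>x. mpeval f x) ` S)"
    using fnn unfolding S_def by (intro bdd_belowI2) auto
  have fsle: "fs \<le> mpeval f x" if "x \<in> S" for x
    unfolding fs_def min_on_def by (rule cINF_lower[OF bddS that])
  have fs0: "fs \<ge> 0"
    unfolding fs_def min_on_def using Sne fnn unfolding S_def by (intro cINF_greatest) auto
  obtain x0 where x0: "x0 \<in> S" using Sne unfolding S_def by auto
  have fsN: "fs \<le> N"
    using fsle[OF x0] supnorm_ge[OF SC[OF x0], of f] unfolding N_def by linarith
  define A where "A = {c::real. f - Poly_Mapping.single 0 c \<in> qmod_trunc r g (2 * l)}"
  have key: "fs - \<delta>' \<in> A" if dd: "\<delta>' > \<delta>" for \<delta>'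
  proof -
    have dp: "\<delta>' > 0" using dd \<delta>0 by linarith
    define h where "h = f - Poly_Mapping.single 0 (fs - \<delta>')"
    have minh: "min_on S h \<ge> \<delta>'"
      unfolding min_on_def using Sne unfolding S_def[symmetric]
      by (intro cINF_greatest) (auto simp: h_def mpeval_diff mpeval_const dest: fsle)
    have minpos: "min_on (semialg r g) h > 0" using minh dp unfolding S_def by linarith
    have degh: "mpdeg h \<le> d" unfolding h_def d_def by (rule mpdeg_minus_const)
    have normh: "supnorm h \<le> N + \<bar>fs - \<delta>'\<bar>"
      unfolding h_def N_def by (rule supnorm_minus_const)
    have cond: "real (2 * l) \<ge> \<gamma> * real (mpdeg h) powr (3.5 * CARD('n))
                 * epsilon (semialg r g) h powr (- 2.5 * CARD('n))"
    proof (cases "d = 0")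
      case True
      then have "mpdeg h = 0" using degh by simp
      then show ?thesis by simp
    next
      case False
      then have d1: "real d \<ge> 1" by simp
      have dpp: "real d powr pp \<ge> 1" using d1 ppm m0 by (intro ge_one_powr_ge_zero) auto
      have lbig': "real l \<ge> 3 powr m * \<gamma> * real d powr pp"
        using lbig unfolding m_def pp_def d_def by simp
      have "3 powr m * \<gamma> * real d powr pp \<ge> 1"
      proof -
        have t: "3 powr m \<ge> 1" using m0 by (intro ge_one_powr_ge_zero) auto
        have "1 * 1 * 1 \<le> 3 powr m * \<gamma> * real d powr pp"
          using t gamma1 dpp by (intro mult_mono) auto
        then show ?thesis by simp
      qed
      then have l1: "real l \<ge> 1" using lbig' by linarith
      define B where "B = (if \<delta>' \<ge> N then 2 powr m else (2 * N / \<delta>) powr m)"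
      define E where "E = epsilon S h"
      have EB: "E powr (- m) \<le> B"
      proof (cases "supnorm h > 0")
        case False
        then have "supnorm h = 0" using supnorm_nonneg[of h] by linarith
        then have "E = 0" unfolding E_def epsilon_def by simp
        then show ?thesis unfolding B_def by simp
      next
        case sh: True
        have "E \<ge> \<delta>' / supnorm h"
          unfolding E_def epsilon_def using minh sh by (simp add: divide_right_mono)
        moreover have "\<delta>' / supnorm h > 0" using dp sh by simp
        ultimately have "E powr (- m) \<le> (\<delta>' / supnorm h) powr (- m)"
          using m0 by (intro powr_mono2') auto
        also have "\<dots> = (supnorm h / \<delta>') powr m"
          by (simp add: powr_minus inverse_powr[symmetric])
        also have "\<dots> \<le> B"
        proof (cases "\<delta>' \<ge> N")
          case True
          have "\<bar>fs - \<delta>'\<bar> \<le> \<delta>'" using fs0 fsN True dp by linarith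
          then have "supnorm h / \<delta>' \<le> 2" using normh True dp by (simp add: divide_le_eq)
          then have "(supnorm h / \<delta>') powr m \<le> 2 powr m" using m0 sh dp
            by (intro powr_mono2) auto
          then show ?thesis unfolding B_def using True by simp
        next
          case False
          have Np: "N > 0" using False dp by linarith
          have \<delta>p: "\<delta> > 0" unfolding \<delta>' using Np d1 l1 gamma1 by simp
          have "\<bar>fs - \<delta>'\<bar> \<le> N" using fs0 fsN False dp by linarith
          then have sh2: "supnorm h \<le> 2 * N" using normh by linarith
          have "supnorm h / \<delta>' \<le> 2 * N / \<delta>'" using sh2 dp by (simp add: divide_right_mono)
          also have "\<dots> \<le> 2 * N / \<delta>" using Np \<delta>p dd by (intro divide_left_mono) auto
          finally have "(supnorm h / \<delta>') powr m \<le> (2 * N / \<delta>) powr m" using m0 sh dp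
            by (intro powr_mono2) auto
          then show ?thesis unfolding B_def using False by simp
        qed
        finally show ?thesis .
      qed
      have "\<gamma> * real (mpdeg h) powr pp * E powr (- m) \<le> \<gamma> * real d powr pp * B"
      proof (intro mult_mono)
        show "real (mpdeg h) powr pp \<le> real d powr pp"
          using degh ppm m0 by (intro powr_mono2) auto
      qed (use EB gamma1 in \<open>auto simp: B_def\<close>)
      also have "\<gamma> * real d powr pp * B \<le> real l"
      proof (cases "\<delta>' \<ge> N")
        case True
        have "2 powr m \<le> 3 powr m" using m0 by (intro powr_mono2) auto
        then have "\<gamma> * real d powr pp * 2 powr m \<le> \<gamma> * real d powr pp * 3 powr m"
          using gamma1 by (intro mult_left_mono) auto
        then show ?thesis using True lbig' unfolding B_def by (simp add: mult_ac)
      next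
        case False
        have Np: "N > 0" using False dp by linarith
        have "\<gamma> * real d powr pp * (2 * N / \<delta>) powr m = (2/3) powr m * real l"
          by (rule key_arith[OF m0 _ Np _ _ ppm \<delta>']) (use gamma1 d1 l1 in auto)
        also have "\<dots> \<le> 1 * real l" using m0 by (intro mult_right_mono powr_le1) auto
        finally show ?thesis using False unfolding B_def by simp
      qed
      finally show ?thesis unfolding E_def S_def m_def pp_def by simp
    qed
    have "h \<in> qmod_trunc r g (2 * l)"
      using gamma minpos cond by blast
    then show ?thesis unfolding A_def h_def by simp
  qed
  have Aub: "c \<le> fs" if "c \<in> A" for c
  proof -
    have "c \<le> mpeval f x" if x: "x \<in> S" for x
      using qmod_trunc_nonneg[of "f - Poly_Mapping.single 0 c" r g "2*l" x] \<open>c \<in> A\<close> x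
      unfolding A_def S_def by (simp add: mpeval_diff mpeval_const)
    then show ?thesis unfolding fs_def min_on_def using Sne unfolding S_def
      by (intro cINF_greatest) auto
  qed
  have bddA: "bdd_above A" using Aub by (intro bdd_aboveI) auto
  have Ane: "A \<noteq> {}" using key[of "\<delta> + 1"] by auto
  have sb: "sos_bound r g l f = Sup A" unfolding sos_bound_def A_def ..
  have up: "Sup A \<le> fs" using Ane Aub by (intro cSup_least) auto
  have lo: "fs - \<delta> \<le> Sup A"
  proof (rule field_le_epsilon)
    fix e :: real assume "e > 0"
    then have "fs - (\<delta> + e) \<le> Sup A" using key[of "\<delta> + e"] bddA by (intro cSup_upper) auto
    then show "fs - \<delta> \<le> Sup A + e" by simp
  qed
  show ?thesis using up lo unfolding sb fs_def S_def \<delta>_def by simp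
qed

end
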